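(* Let $X=\{x_1,\dots,x_n\}$, $S=K[X]$, and let $x\in X$. Let $I_1\subset S$ be a monomial ideal with linear quotients and let $I_2\subset S$ be a monomial ideal with linear quotients whose minimal generators lie in $K[X\setminus\{x\}]$, such that $I_2\subseteq I_1$. Let $I=xI_1+I_2$ and suppose $\mathcal{G}(xI_1)\subseteq\mathcal{G}(I)$. Then $I$ has linear quotients.
   Context: For a monomial ideal $I$, $\mathcal{G}(I)$ is its minimal monomial generating set. A monomial ideal $I$ has linear quotients if $\mathcal{G}(I)$ can be ordered $u_1,\dots,u_s$ such that for each $i=2,\dots,s$ the colon ideal $(u_1,\dots,u_{i-1}):(u_i)$ is generated by variables. *)

theory Defs
  imports Main
begin

text \<open>Monomials in the variables 'v (a finite type, the variable set X) are exponent
vectors 'v \<Rightarrow> nat; multiplication is addition, divisibility is the pointwise order.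
A monomial ideal of S = K[X] is identified with the set of monomials it contains
(an upward closed set under divisibility).\<close>

type_synonym 'v monomial = "'v \<Rightarrow> nat"

definition mdvd :: "'v monomial \<Rightarrow> 'v monomial \<Rightarrow> bool" where
  "mdvd u w \<longleftrightarrow> (\<forall>v. u v \<le> w v)"

definition mmult :: "'v monomial \<Rightarrow> 'v monomial \<Rightarrow> 'v monomial" where
  "mmult u w = (\<lambda>v. u v + w v)"

definition var :: "'v \<Rightarrow> 'v monomial" where
  "var x = (\<lambda>v. if v = x then 1 else 0)"

definition monomial_ideal :: "'v monomial set \<Rightarrow> bool" where
  "monomial_ideal I \<longleftrightarrow> (\<forall>u\<in>I. \<forall>w. mdvd u w \<longrightarrow> w \<in> I)"

definition gen_ideal :: "'v monomial set \<Rightarrow> 'v monomial set" where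
  "gen_ideal G = {w. \<exists>g\<in>G. mdvd g w}"

definition mingens :: "'v monomial set \<Rightarrow> 'v monomial set" where
  "mingens I = {u\<in>I. \<forall>w\<in>I. mdvd w u \<longrightarrow> w = u}"

definition colon :: "'v monomial set \<Rightarrow> 'v monomial \<Rightarrow> 'v monomial set" where
  "colon J u = {w. mmult w u \<in> J}"

definition mult_ideal :: "'v monomial \<Rightarrow> 'v monomial set \<Rightarrow> 'v monomial set" where
  "mult_ideal u I = mmult u ` I"

definition generated_by_variables :: "'v monomial set \<Rightarrow> bool" where
  "generated_by_variables J \<longleftrightarrow> (\<exists>V. J = gen_ideal (var ` V))"

definition linear_quotients :: "'v monomial set \<Rightarrow> bool" where
  "linear_quotients I \<longleftrightarrow>
     (\<exists>us. distinct us \<and> set us = mingens I \<and>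
        (\<forall>i. 1 \<le> i \<and> i < length us \<longrightarrow>
              generated_by_variables (colon (gen_ideal (set (take i us))) (us ! i))))"

end

theory Submission
  imports Defs
begin

lemma mdvd_trans: "mdvd a b \<Longrightarrow> mdvd b c \<Longrightarrow> mdvd a c"
  unfolding mdvd_def using le_trans by blast

lemma mmult_cancel: "mmult c a = mmult c b \<longleftrightarrow> a = b"
  unfolding mmult_def by (auto simp: fun_eq_iff)

lemma mdvd_mmult_cancel: "mdvd (mmult c a) (mmult c b) \<longleftrightarrow> mdvd a b"
  unfolding mmult_def mdvd_def by auto

lemma mingens_below:
  fixes I :: "('v::finite) monomial set"
  shows "u \<in> I \<Longrightarrow> \<exists>g\<in>mingens I. mdvd g u"
proof (induction "\<Sum>v\<in>UNIV. u v" arbitrary: u rule: less_induct)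
  case less
  show ?case
  proof (cases "u \<in> mingens I")
    case True
    then show ?thesis by (auto simp: mdvd_def)
  next
    case False
    then obtain w where w: "w \<in> I" "mdvd w u" "w \<noteq> u"
      using less.prems unfolding mingens_def by auto
    then obtain v where v: "w v \<noteq> u v" by (auto simp: fun_eq_iff)
    have "(\<Sum>v\<in>UNIV. w v) < (\<Sum>v\<in>UNIV. u v)"
      apply (rule sum_strict_mono_ex1)
      using w v by (auto simp: mdvd_def intro!: bexI[of _ v] le_neq_trans)
    then obtain g where "g \<in> mingens I" "mdvd g w" using less.hyps w(1) by blast
    then show ?thesis using w(2) mdvd_trans by blast
  qed
qed

lemma colon_gen_mult:
  "colon (gen_ideal (mmult c ` A)) (mmult c u) = colon (gen_ideal A) u"
proof -
  have e: "(\<forall>v. c v + g v \<le> w v + (c v + u v)) = (\<forall>v. g v \<le> w v + u v)" for g w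
    by (simp add: add.left_commute)
  show ?thesis
    unfolding colon_def gen_ideal_def mdvd_def mmult_def using e by auto
qed

lemma colon_x_part:
  assumes "g \<in> A" "mdvd g v" "v x = 0"
  shows "colon (gen_ideal (mmult (var x) ` A)) v = gen_ideal (var ` {x})"
proof
  show "colon (gen_ideal (mmult (var x) ` A)) v \<subseteq> gen_ideal (var ` {x})"
  proof
    fix w assume "w \<in> colon (gen_ideal (mmult (var x) ` A)) v"
    then obtain h where "h \<in> A" "\<forall>y. var x y + h y \<le> w y + v y"
      unfolding colon_def gen_ideal_def mdvd_def mmult_def by auto
    then have "var x x + h x \<le> w x + v x" by blast
    then have "1 \<le> w x" using assms(3) by (simp add: var_def)
    then show "w \<in> gen_ideal (var ` {x})"
      unfolding gen_ideal_def mdvd_def var_def by auto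
  qed
next
  show "gen_ideal (var ` {x}) \<subseteq> colon (gen_ideal (mmult (var x) ` A)) v"
  proof
    fix w assume "w \<in> gen_ideal (var ` {x})"
    then have wx: "1 \<le> w x" unfolding gen_ideal_def mdvd_def var_def
      by (auto dest: spec[of _ x])
    have "\<forall>y. var x y + g y \<le> w y + v y"
    proof
      fix y show "var x y + g y \<le> w y + v y"
        using wx assms(2,3) unfolding mdvd_def var_def
        by (cases "y = x") (auto dest: spec[of _ y] spec[of _ x])
    qed
    then show "w \<in> colon (gen_ideal (mmult (var x) ` A)) v"
      using assms(1) unfolding colon_def gen_ideal_def mdvd_def mmult_def by auto
  qed
qed

lemma colon_union: "colon (A \<union> B) u = colon A u \<union> colon B u"
  unfolding colon_def by auto

lemma gen_ideal_union: "gen_ideal (A \<union> B) = gen_ideal A \<union> gen_ideal B"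
  unfolding gen_ideal_def by auto

lemma gbv_union: "generated_by_variables A \<Longrightarrow> generated_by_variables B
   \<Longrightarrow> generated_by_variables (A \<union> B)"
  unfolding generated_by_variables_def
  by (metis gen_ideal_union image_Un)

theorem lemma3p2:
  fixes I1 I2 :: "('v::finite) monomial set" and x :: 'v
  assumes "monomial_ideal I1" and "linear_quotients I1"
    and "monomial_ideal I2" and "linear_quotients I2"
    and "\<forall>g\<in>mingens I2. g x = 0"
    and "I2 \<subseteq> I1"
    and "mingens (mult_ideal (var x) I1) \<subseteq> mingens (mult_ideal (var x) I1 \<union> I2)"
  shows "linear_quotients (mult_ideal (var x) I1 \<union> I2)"
proof -
  define f where "f = mmult (var x)"
  define I where "I = mult_ideal (var x) I1 \<union> I2"
  obtain us1 where u1: "distinct us1" "set us1 = mingens I1"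
    "\<And>i. 1 \<le> i \<Longrightarrow> i < length us1 \<Longrightarrow>
       generated_by_variables (colon (gen_ideal (set (take i us1))) (us1 ! i))"
    using assms(2) unfolding linear_quotients_def by blast
  obtain us2 where u2: "distinct us2" "set us2 = mingens I2"
    "\<And>i. 1 \<le> i \<Longrightarrow> i < length us2 \<Longrightarrow>
       generated_by_variables (colon (gen_ideal (set (take i us2))) (us2 ! i))"
    using assms(4) unfolding linear_quotients_def by blast
  have fx: "f a x \<ge> 1" for a unfolding f_def mmult_def var_def by simp
  have finj: "inj f" unfolding f_def inj_def using mmult_cancel by blast
  have mg1: "mingens (mult_ideal (var x) I1) = f ` mingens I1"
  proof
    show "mingens (mult_ideal (var x) I1) \<subseteq> f ` mingens I1"
    proof
      fix u assume u: "u \<in> mingens (mult_ideal (var x) I1)"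
      then obtain a where a: "a \<in> I1" "u = f a"
        unfolding mingens_def mult_ideal_def f_def by auto
      have "b = a" if "b \<in> I1" "mdvd b a" for b
      proof -
        have "f b \<in> mult_ideal (var x) I1" using that unfolding mult_ideal_def f_def by auto
        moreover have "mdvd (f b) u" using that a unfolding f_def by (simp add: mdvd_mmult_cancel)
        ultimately have "f b = f a" using u a unfolding mingens_def by auto
        then show ?thesis unfolding f_def by (simp add: mmult_cancel)
      qed
      then show "u \<in> f ` mingens I1" using a unfolding mingens_def by auto
    qed
  next
    show "f ` mingens I1 \<subseteq> mingens (mult_ideal (var x) I1)"
    proof
      fix u assume "u \<in> f ` mingens I1"
      then obtain a where a: "a \<in> mingens I1" "u = f a" by auto
      have "w = u" if w1: "w \<in> mult_ideal (var x) I1" and w2: "mdvd w u" for w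
      proof -
        obtain b where b: "b \<in> I1" "w = f b" using w1 unfolding mult_ideal_def f_def by auto
        then have "mdvd b a" using w2 a unfolding f_def by (simp add: mdvd_mmult_cancel)
        then have "b = a" using a b unfolding mingens_def by auto
        then show ?thesis using a b by simp
      qed
      moreover have "u \<in> mult_ideal (var x) I1" using a unfolding mingens_def mult_ideal_def f_def by auto
      ultimately show "u \<in> mingens (mult_ideal (var x) I1)" unfolding mingens_def by auto
    qed
  qed
  have M: "mingens I = f ` mingens I1 \<union> mingens I2"
  proof
    show "mingens I \<subseteq> f ` mingens I1 \<union> mingens I2"
    proof
      fix u assume u: "u \<in> mingens I"
      show "u \<in> f ` mingens I1 \<union> mingens I2"
      proof (cases "u \<in> mult_ideal (var x) I1")
        case True
        then have "u \<in> mingens (mult_ideal (var x) I1)"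
          using u unfolding mingens_def I_def by auto
        then show ?thesis using mg1 by auto
      next
        case False
        then have "u \<in> mingens I2" using u unfolding mingens_def I_def by auto
        then show ?thesis by auto
      qed
    qed
  next
    show "f ` mingens I1 \<union> mingens I2 \<subseteq> mingens I"
    proof (rule Un_least)
      show "f ` mingens I1 \<subseteq> mingens I" using assms(7) mg1 I_def by simp
      show "mingens I2 \<subseteq> mingens I"
      proof
        fix g assume g: "g \<in> mingens I2"
        then have gx: "g x = 0" using assms(5) by auto
        have "w = g" if wI: "w \<in> I" and wg: "mdvd w g" for w
        proof (cases "w \<in> I2")
          case True then show ?thesis using g wg unfolding mingens_def by auto
        next
          case False
          then obtain a where "w = f a" using wI unfolding I_def mult_ideal_def f_def by auto
          then have "w x \<ge> 1" using fx by simp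
          then show ?thesis using wg gx unfolding mdvd_def by (auto dest: spec[of _ x])
        qed
        then show "g \<in> mingens I" using g unfolding mingens_def I_def by auto
      qed
    qed
  qed
  define us where "us = map f us1 @ us2"
  have dist: "distinct us"
  proof -
    have "set (map f us1) \<inter> set us2 = {}"
    proof (rule ccontr)
      assume "set (map f us1) \<inter> set us2 \<noteq> {}"
      then obtain a where "a \<in> set (map f us1)" "a \<in> set us2" by blast
      then have "a x \<ge> 1" "a x = 0" using fx u2(2) assms(5) by auto
      then show False by simp
    qed
    then show ?thesis unfolding us_def using u1(1) u2(1) finj
      by (simp add: distinct_map inj_on_subset[OF finj])
  qed
  have setus: "set us = mingens I" unfolding us_def using M u1(2) u2(2) by simp
  have quot: "generated_by_variables (colon (gen_ideal (set (take i us))) (us ! i))"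
    if i: "1 \<le> i" "i < length us" for i
  proof (cases "i < length us1")
    case True
    then have "take i us = map f (take i us1)" "us ! i = f (us1 ! i)"
      unfolding us_def by (auto simp: nth_append take_map)
    then show ?thesis using u1(3)[OF i(1) True] unfolding f_def
      by (simp add: colon_gen_mult)
  next
    case False
    define j where "j = i - length us1"
    have j: "j < length us2" using i False unfolding j_def us_def by auto
    have tk: "take i us = map f us1 @ take j us2" "us ! i = us2 ! j"
      unfolding us_def j_def using False by (auto simp: nth_append)
    have v: "us2 ! j \<in> mingens I2" using j u2(2) nth_mem by blast
    then have vI1: "us2 ! j \<in> I1" using assms(6) unfolding mingens_def by auto
    obtain g where g: "g \<in> mingens I1" "mdvd g (us2 ! j)"
      using mingens_below[OF vI1] by blast
    have p1: "colon (gen_ideal (f ` set us1)) (us2 ! j) = gen_ideal (var ` {x})"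
      unfolding f_def using colon_x_part[of g "set us1" "us2 ! j" x] g u1(2) v assms(5)
      by auto
    have p2: "generated_by_variables (colon (gen_ideal (set (take j us2))) (us2 ! j))"
    proof (cases "j = 0")
      case True
      then show ?thesis unfolding generated_by_variables_def
        by (intro exI[of _ "{}"]) (auto simp: colon_def gen_ideal_def)
    next
      case False
      then show ?thesis using u2(3) j by auto
    qed
    have "colon (gen_ideal (set (take i us))) (us ! i)
       = colon (gen_ideal (f ` set us1)) (us2 ! j) \<union> colon (gen_ideal (set (take j us2))) (us2 ! j)"
      unfolding tk by (simp add: gen_ideal_union colon_union)
    then show ?thesis using p1 p2 gbv_union
      unfolding generated_by_variables_def by (metis gbv_union generated_by_variables_def)
  qed
  show ?thesis unfolding linear_quotients_def I_def[symmetric]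
    using dist setus quot by blast
qed

end
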